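(* Let $G$ be a finite group, $\xi:G\to G$ an automorphism, $k>0$ an integer, and $\nu:G^k\to G^k$ the automorphism $\nu(g_0,\dots,g_{k-1})=(\xi(g_{k-1}),g_0,\dots,g_{k-2})$. Let $G^k$ act on $KG^k$ by $a\cdot b=ab\nu(a)^{-1}$ and $G$ act on $KG$ by $a\cdot b=ab\xi(a)^{-1}$ (for group elements $a,b$, extended linearly in $b$). Then the map $G^k\to G$, $(g_0,\dots,g_{k-1})\mapsto g_{k-1}\cdots g_0$, induces a linear isomorphism of coinvariant spaces $(KG^k)_{G^k}\to(KG)_G$.
   Context: $K$ is a field of characteristic $0$; $(KG)_G$ denotes the space of coinvariants $KG/\mathrm{span}\{a\cdot b-b\}$. *)

theory Defs
  imports "HOL-Algebra.Group"
begin

text \<open>The group algebra KG of a finite group G is modelled as the K-valued functions on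
  the carrier, vanishing outside the carrier (the coefficient of g is f g).\<close>

definition group_alg :: "'a set \<Rightarrow> ('a \<Rightarrow> 'k::field) set" where
  "group_alg S = {f. \<forall>x. x \<notin> S \<longrightarrow> f x = 0}"

definition basis_vec :: "'a \<Rightarrow> ('a \<Rightarrow> 'k::field)" where
  "basis_vec g = (\<lambda>x. if x = g then 1 else 0)"

definition lin_span :: "('a \<Rightarrow> 'k::field) set \<Rightarrow> ('a \<Rightarrow> 'k) set" where
  "lin_span S = {f. \<exists>F c. finite F \<and> F \<subseteq> S \<and> f = (\<lambda>x. \<Sum>v\<in>F. c v * v x)}"

definition coinv_rel :: "('a, 'm) monoid_scheme \<Rightarrow> ('a \<Rightarrow> 'a) \<Rightarrow> ('a \<Rightarrow> 'k::field) set" where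
  "coinv_rel H \<nu> = lin_span {(\<lambda>x. basis_vec (a \<otimes>\<^bsub>H\<^esub> b \<otimes>\<^bsub>H\<^esub> inv\<^bsub>H\<^esub> (\<nu> a)) x - basis_vec b x)
                            | a b. a \<in> carrier H \<and> b \<in> carrier H}"

definition pow_group :: "('a, 'm) monoid_scheme \<Rightarrow> nat \<Rightarrow> (nat \<Rightarrow> 'a) monoid" where
  "pow_group G k = \<lparr>carrier = (\<Pi>\<^sub>E i\<in>{..<k}. carrier G),
     mult = (\<lambda>g h. (\<lambda>i\<in>{..<k}. g i \<otimes>\<^bsub>G\<^esub> h i)),
     one = (\<lambda>i\<in>{..<k}. \<one>\<^bsub>G\<^esub>)\<rparr>"

definition shift_aut :: "('a \<Rightarrow> 'a) \<Rightarrow> nat \<Rightarrow> (nat \<Rightarrow> 'a) \<Rightarrow> (nat \<Rightarrow> 'a)" where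
  "shift_aut \<xi> k g = (\<lambda>i\<in>{..<k}. if i = 0 then \<xi> (g (k - 1)) else g (i - 1))"

fun rev_prod :: "('a, 'm) monoid_scheme \<Rightarrow> (nat \<Rightarrow> 'a) \<Rightarrow> nat \<Rightarrow> 'a" where
  "rev_prod G g 0 = \<one>\<^bsub>G\<^esub>"
| "rev_prod G g (Suc n) = g n \<otimes>\<^bsub>G\<^esub> rev_prod G g n"

definition push_lin :: "'a set \<Rightarrow> 'b set \<Rightarrow> ('a \<Rightarrow> 'b) \<Rightarrow> ('a \<Rightarrow> 'k::field) \<Rightarrow> ('b \<Rightarrow> 'k)" where
  "push_lin A B \<phi> f = (\<lambda>y. if y \<in> B then (\<Sum>x\<in>{x\<in>A. \<phi> x = y}. f x) else 0)"

text \<open>The linear map L: V1 -> V2 induces a linear isomorphism V1/R1 -> V2/R2: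
  it is well defined (L R1 \<subseteq> R2), injective (L x \<in> R2 implies x \<in> R1) and
  surjective (every y is congruent mod R2 to some L x).\<close>
definition induces_quot_iso ::
  "('a \<Rightarrow> 'k::field) set \<Rightarrow> ('a \<Rightarrow> 'k) set \<Rightarrow> ('b \<Rightarrow> 'k) set \<Rightarrow> ('b \<Rightarrow> 'k) set
     \<Rightarrow> (('a \<Rightarrow> 'k) \<Rightarrow> ('b \<Rightarrow> 'k)) \<Rightarrow> bool" where
  "induces_quot_iso V1 R1 V2 R2 L \<longleftrightarrow>
     (\<forall>x\<in>V1. x \<in> R1 \<longrightarrow> L x \<in> R2) \<and>
     (\<forall>x\<in>V1. L x \<in> R2 \<longrightarrow> x \<in> R1) \<and>
     (\<forall>y\<in>V2. \<exists>x\<in>V1. (\<lambda>t. L x t - y t) \<in> R2)"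

end

theory Submission
  imports Defs
begin


lemma lin_span_zero: "(\<lambda>x. 0) \<in> lin_span S"
  unfolding lin_span_def by (rule CollectI, rule exI[of _ "{}"]) auto

lemma lin_span_gen: "v \<in> S \<Longrightarrow> v \<in> lin_span S"
  unfolding lin_span_def
  by (rule CollectI, rule exI[of _ "{v}"], rule exI[of _ "\<lambda>_. 1"]) auto

lemma lin_span_scale: "f \<in> lin_span S \<Longrightarrow> (\<lambda>x. d * f x) \<in> lin_span S"
proof -
  assume "f \<in> lin_span S"
  then obtain F c where F: "finite F" "F \<subseteq> S" "f = (\<lambda>x. \<Sum>v\<in>F. c v * v x)"
    unfolding lin_span_def by blast
  show ?thesis unfolding lin_span_def
    by (rule CollectI, rule exI[of _ F], rule exI[of _ "\<lambda>v. d * c v"])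
       (simp add: F sum_distrib_left mult.assoc)
qed

lemma lin_span_add: "f \<in> lin_span S \<Longrightarrow> g \<in> lin_span S \<Longrightarrow> (\<lambda>x. f x + g x) \<in> lin_span S"
proof -
  assume "f \<in> lin_span S" "g \<in> lin_span S"
  then obtain F c G d where F: "finite F" "F \<subseteq> S" "f = (\<lambda>x. \<Sum>v\<in>F. c v * v x)"
    and G: "finite G" "G \<subseteq> S" "g = (\<lambda>x. \<Sum>v\<in>G. d v * v x)"
    unfolding lin_span_def by blast
  define e where "e v = (if v \<in> F then c v else 0) + (if v \<in> G then d v else 0)" for v
  have "\<And>x. (\<Sum>v\<in>F \<union> G. e v * v x) = (\<Sum>v\<in>F. c v * v x) + (\<Sum>v\<in>G. d v * v x)"
  proof -
    fix x
    have "(\<Sum>v\<in>F \<union> G. e v * v x) = (\<Sum>v\<in>F \<union> G. (if v \<in> F then c v * v x else 0)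
        + (if v \<in> G then d v * v x else 0))"
      unfolding e_def by (rule sum.cong) (auto simp: distrib_right)
    also have "\<dots> = (\<Sum>v\<in>F \<union> G. (if v \<in> F then c v * v x else 0))
        + (\<Sum>v\<in>F \<union> G. (if v \<in> G then d v * v x else 0))"
      by (rule sum.distrib)
    also have "\<dots> = (\<Sum>v\<in>F. c v * v x) + (\<Sum>v\<in>G. d v * v x)"
      using F(1) G(1) by (simp add: sum.If_cases Int_absorb1 Int_absorb2 inf_sup_absorb Int_commute)
    finally show "?thesis x" .
  qed
  then show ?thesis unfolding lin_span_def
    by (intro CollectI exI[of _ "F \<union> G"] exI[of _ e]) (simp add: F G)
qed

lemma lin_span_sum:
  assumes "finite I" "\<And>i. i \<in> I \<Longrightarrow> f i \<in> lin_span S"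
  shows "(\<lambda>x. \<Sum>i\<in>I. d i * f i x) \<in> lin_span S"
  using assms
proof (induction I rule: finite_induct)
  case empty then show ?case by (simp add: lin_span_zero)
next
  case (insert i I)
  have "(\<lambda>x. d i * f i x + (\<Sum>i\<in>I. d i * f i x)) \<in> lin_span S"
    by (rule lin_span_add) (use insert in \<open>auto intro: lin_span_scale\<close>)
  then show ?case using insert by simp
qed

lemma push_lin_comb:
  "push_lin A B \<phi> (\<lambda>x. \<Sum>v\<in>F. c v * v x) = (\<lambda>y. \<Sum>v\<in>F. c v * push_lin A B \<phi> v y)"
  unfolding push_lin_def
  by (rule ext) (auto simp: sum_distrib_left intro: sum.swap)

lemma push_lin_span:
  assumes "\<And>v. v \<in> S \<Longrightarrow> push_lin A B \<phi> v \<in> lin_span T"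
    and "f \<in> lin_span S"
  shows "push_lin A B \<phi> f \<in> lin_span T"
proof -
  obtain F c where F: "finite F" "F \<subseteq> S" "f = (\<lambda>x. \<Sum>v\<in>F. c v * v x)"
    using assms(2) unfolding lin_span_def by blast
  show ?thesis unfolding F(3) push_lin_comb
    by (rule lin_span_sum) (use F assms(1) in auto)
qed

lemma push_lin_gen:
  assumes "finite A" "p \<in> A" "q \<in> A" "\<phi> ` A \<subseteq> B"
  shows "push_lin A B \<phi> (\<lambda>x. basis_vec p x - basis_vec q x)
       = (\<lambda>y. basis_vec (\<phi> p) y - (basis_vec (\<phi> q) y :: 'k::field))"
proof
  fix y
  show "push_lin A B \<phi> (\<lambda>x. basis_vec p x - basis_vec q x) y
       = basis_vec (\<phi> p) y - (basis_vec (\<phi> q) y :: 'k::field)"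
  proof (cases "y \<in> B")
    case True
    have "(\<Sum>x\<in>{x\<in>A. \<phi> x = y}. basis_vec p x - basis_vec q x)
       = (\<Sum>x\<in>{x\<in>A. \<phi> x = y}. (basis_vec p x :: 'k)) - (\<Sum>x\<in>{x\<in>A. \<phi> x = y}. basis_vec q x)"
      by (simp add: sum_subtractf)
    also have "\<dots> = basis_vec (\<phi> p) y - basis_vec (\<phi> q) y"
      using assms by (simp add: basis_vec_def sum.delta' )
    finally show ?thesis using True by (simp add: push_lin_def)
  next
    case False
    then show ?thesis using assms by (auto simp: push_lin_def basis_vec_def)
  qed
qed

lemma push_lin_comp:
  assumes "finite A" "\<phi> ` A \<subseteq> B" "finite B"
  shows "push_lin B C \<psi> (push_lin A B \<phi> f) = push_lin A C (\<psi> \<circ> \<phi>) f"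
proof
  fix z
  show "push_lin B C \<psi> (push_lin A B \<phi> f) z = push_lin A C (\<psi> \<circ> \<phi>) f z"
  proof (cases "z \<in> C")
    case True
    have "(\<Sum>y\<in>{y\<in>B. \<psi> y = z}. (\<Sum>x\<in>{x\<in>A. \<phi> x = y}. f x))
        = (\<Sum>x\<in>{x\<in>A. \<psi> (\<phi> x) = z}. f x)"
    proof -
      have "(\<Sum>y\<in>{y\<in>B. \<psi> y = z}. (\<Sum>x\<in>{x\<in>{x\<in>A. \<psi> (\<phi> x) = z}. \<phi> x = y}. f x))
          = (\<Sum>x\<in>{x\<in>A. \<psi> (\<phi> x) = z}. f x)"
        by (rule sum.group) (use assms in auto)
      moreover have "\<And>y. y \<in> {y\<in>B. \<psi> y = z} \<Longrightarrow>
          {x\<in>{x\<in>A. \<psi> (\<phi> x) = z}. \<phi> x = y} = {x\<in>A. \<phi> x = y}" by auto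
      ultimately show ?thesis by simp
    qed
    then show ?thesis using True by (simp add: push_lin_def)
  qed (simp add: push_lin_def)
qed



lemma pg_carrier: "carrier (pow_group G k) = (\<Pi>\<^sub>E i\<in>{..<k}. carrier G)"
  by (simp add: pow_group_def)
lemma pg_mult: "x \<otimes>\<^bsub>pow_group G k\<^esub> y = (\<lambda>i\<in>{..<k}. x i \<otimes>\<^bsub>G\<^esub> y i)"
  by (simp add: pow_group_def)
lemma pg_one: "\<one>\<^bsub>pow_group G k\<^esub> = (\<lambda>i\<in>{..<k}. \<one>\<^bsub>G\<^esub>)"
  by (simp add: pow_group_def)

lemma pg_group:
  fixes G (structure)
  assumes "group G" shows "group (pow_group G k)"
proof -
  interpret group G by fact
  show ?thesis
  proof (rule groupI)
    fix x y z
    assume x: "x \<in> carrier (pow_group G k)" and y: "y \<in> carrier (pow_group G k)"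
      and z: "z \<in> carrier (pow_group G k)"
    show "(x \<otimes>\<^bsub>pow_group G k\<^esub> y) \<otimes>\<^bsub>pow_group G k\<^esub> z = x \<otimes>\<^bsub>pow_group G k\<^esub> (y \<otimes>\<^bsub>pow_group G k\<^esub> z)"
      using x y z by (auto simp: pg_carrier pg_mult m_assoc PiE_iff)
  next
    fix x y
    assume x: "x \<in> carrier (pow_group G k)" and y: "y \<in> carrier (pow_group G k)"
    show "x \<otimes>\<^bsub>pow_group G k\<^esub> y \<in> carrier (pow_group G k)"
      using x y by (auto simp: pg_carrier pg_mult PiE_iff)
  next
    show "\<one>\<^bsub>pow_group G k\<^esub> \<in> carrier (pow_group G k)" by (auto simp: pg_carrier pg_one)
  next
    fix x assume x: "x \<in> carrier (pow_group G k)"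
    show "\<one>\<^bsub>pow_group G k\<^esub> \<otimes>\<^bsub>pow_group G k\<^esub> x = x"
      using x by (auto simp: pg_carrier pg_mult pg_one PiE_iff extensional_def)
    show "\<exists>y\<in>carrier (pow_group G k). y \<otimes>\<^bsub>pow_group G k\<^esub> x = \<one>\<^bsub>pow_group G k\<^esub>"
      using x by (intro bexI[of _ "\<lambda>i\<in>{..<k}. inv (x i)"]) (auto simp: pg_carrier pg_mult pg_one PiE_iff)
  qed
qed

lemma pg_inv:
  assumes "group G" "a \<in> carrier (pow_group G k)"
  shows "inv\<^bsub>pow_group G k\<^esub> a = (\<lambda>i\<in>{..<k}. inv\<^bsub>G\<^esub> (a i))"
proof -
  interpret group G by fact
  interpret H: group "pow_group G k" by (rule pg_group) fact
  show ?thesis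
    using assms(2) by (intro H.inv_equality) (auto simp: pg_carrier pg_mult pg_one PiE_iff)
qed

lemma shift_closed:
  assumes "\<xi> \<in> iso G G" "a \<in> carrier (pow_group G k)" "k > 0"
  shows "shift_aut \<xi> k a \<in> carrier (pow_group G k)"
  using assms by (auto simp: pg_carrier shift_aut_def iso_def hom_def PiE_iff)

lemma twist_comp:
  assumes "group G" "\<xi> \<in> iso G G" "k > 0"
    "a \<in> carrier (pow_group G k)" "b \<in> carrier (pow_group G k)" "i < k"
  shows "(a \<otimes>\<^bsub>pow_group G k\<^esub> b \<otimes>\<^bsub>pow_group G k\<^esub> inv\<^bsub>pow_group G k\<^esub> (shift_aut \<xi> k a)) i
     = a i \<otimes>\<^bsub>G\<^esub> b i \<otimes>\<^bsub>G\<^esub> inv\<^bsub>G\<^esub> (if i = 0 then \<xi> (a (k - 1)) else a (i - 1))"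
  using assms shift_closed[OF assms(2,4,3)]
  by (simp add: pg_inv pg_mult shift_aut_def)

lemma twist_closed:
  assumes "group G" "\<xi> \<in> iso G G" "k > 0"
    "a \<in> carrier (pow_group G k)" "b \<in> carrier (pow_group G k)"
  shows "a \<otimes>\<^bsub>pow_group G k\<^esub> b \<otimes>\<^bsub>pow_group G k\<^esub> inv\<^bsub>pow_group G k\<^esub> (shift_aut \<xi> k a) \<in> carrier (pow_group G k)"
proof -
  interpret H: group "pow_group G k" by (rule pg_group) fact
  show ?thesis using assms shift_closed[OF assms(2,4,3)] by simp
qed

lemma rev_prod_closed:
  assumes "group G" "b \<in> carrier (pow_group G k)" "n \<le> k"
  shows "rev_prod G b n \<in> carrier G"
proof -
  interpret group G by fact
  show ?thesis using assms(2,3) by (induction n) (auto simp: pg_carrier PiE_iff)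
qed

lemma rev_prod_twist:
  fixes G (structure)
  assumes "group G" "\<xi> \<in> iso G G" "k > 0"
    "a \<in> carrier (pow_group G k)" "b \<in> carrier (pow_group G k)"
  shows "rev_prod G (a \<otimes>\<^bsub>pow_group G k\<^esub> b \<otimes>\<^bsub>pow_group G k\<^esub> inv\<^bsub>pow_group G k\<^esub> (shift_aut \<xi> k a)) k
     = a (k - 1) \<otimes>\<^bsub>G\<^esub> rev_prod G b k \<otimes>\<^bsub>G\<^esub> inv\<^bsub>G\<^esub> (\<xi> (a (k - 1)))"
proof -
  interpret group G by fact
  let ?c = "a \<otimes>\<^bsub>pow_group G k\<^esub> b \<otimes>\<^bsub>pow_group G k\<^esub> inv\<^bsub>pow_group G k\<^esub> (shift_aut \<xi> k a)"
  have ac: "\<And>i. i < k \<Longrightarrow> a i \<in> carrier G" and bc: "\<And>i. i < k \<Longrightarrow> b i \<in> carrier G"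
    using assms(4,5) by (auto simp: pg_carrier PiE_iff)
  have xc: "\<xi> (a (k - 1)) \<in> carrier G"
    using assms(2) ac[of "k - 1"] assms(3) by (auto simp: iso_def hom_def)
  have "1 \<le> n \<Longrightarrow> n \<le> k \<Longrightarrow> rev_prod G ?c n = a (n - 1) \<otimes> rev_prod G b n \<otimes> inv (\<xi> (a (k - 1)))" for n
  proof (induction n)
    case 0 then show ?case by simp
  next
    case (Suc n)
    show ?case
    proof (cases "n = 0")
      case True
      then show ?thesis using twist_comp[OF assms, of 0] ac bc xc assms(3) by simp
    next
      case False
      have rb: "rev_prod G b n \<in> carrier G" using rev_prod_closed[OF assms(1,5)] Suc by simp
      have an: "a n \<in> carrier G" "a (n-1) \<in> carrier G" "b n \<in> carrier G" using ac bc Suc by auto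
      have "rev_prod G ?c (Suc n) = (a n \<otimes> b n \<otimes> inv (a (n - 1))) \<otimes> (a (n - 1) \<otimes> rev_prod G b n \<otimes> inv (\<xi> (a (k - 1))))"
        using Suc False twist_comp[OF assms, of n] by simp
      also have "\<dots> = a n \<otimes> (b n \<otimes> rev_prod G b n) \<otimes> inv (\<xi> (a (k - 1)))"
        proof -
        have cancel: "\<And>x r. x \<in> carrier G \<Longrightarrow> r \<in> carrier G \<Longrightarrow> inv x \<otimes> (x \<otimes> r) = r"
          by (simp add: m_assoc[symmetric])
        show ?thesis using an rb xc cancel by (simp add: m_assoc)
      qed
      finally show ?thesis by simp
    qed
  qed
  then show ?thesis using assms(3) by simp
qed



definition emb :: "('a, 'm) monoid_scheme \<Rightarrow> nat \<Rightarrow> 'a \<Rightarrow> (nat \<Rightarrow> 'a)" where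
  "emb G k c = (\<lambda>i\<in>{..<k}. if i = k - 1 then c else \<one>\<^bsub>G\<^esub>)"

lemma emb_closed:
  assumes "group G" "c \<in> carrier G" shows "emb G k c \<in> carrier (pow_group G k)"
proof -
  interpret group G by fact
  show ?thesis using assms(2) by (auto simp: emb_def pg_carrier)
qed

lemma rev_prod_emb:
  assumes "group G" "c \<in> carrier G" "k > 0"
  shows "rev_prod G (emb G k c) k = c"
proof -
  interpret group G by fact
  have "n < k \<Longrightarrow> rev_prod G (emb G k c) n = \<one>\<^bsub>G\<^esub>" for n
    by (induction n) (auto simp: emb_def)
  then have "rev_prod G (emb G k c) (k - 1) = \<one>\<^bsub>G\<^esub>" using assms(3) by simp
  moreover have "k = Suc (k - 1)" using assms(3) by simp
  moreover have "emb G k c (k - 1) = c" using assms(3) by (simp add: emb_def)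
  ultimately show ?thesis using assms(2)
    by (metis rev_prod.simps(2) r_one)
qed

lemma emb_inj:
  assumes "k > 0" shows "inj_on (emb G k) (carrier G)"
proof
  fix x y assume "emb G k x = emb G k y"
  then have "emb G k x (k - 1) = emb G k y (k - 1)" by simp
  then show "x = y" using assms by (simp add: emb_def)
qed

lemma xi_one:
  assumes "group G" "\<xi> \<in> iso G G" shows "\<xi> \<one>\<^bsub>G\<^esub> = \<one>\<^bsub>G\<^esub>"
  using hom_one[of \<xi> G G] assms by (auto simp: iso_def)

lemma xi_closed:
  assumes "\<xi> \<in> iso G G" "x \<in> carrier G" shows "\<xi> x \<in> carrier G"
  using assms by (auto simp: iso_def hom_def)

lemma orbit_rep:
  fixes G (structure)
  assumes "group G" "\<xi> \<in> iso G G" "k > 0" "b \<in> carrier (pow_group G k)"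
  shows "\<exists>a\<in>carrier (pow_group G k).
     a \<otimes>\<^bsub>pow_group G k\<^esub> b \<otimes>\<^bsub>pow_group G k\<^esub> inv\<^bsub>pow_group G k\<^esub> (shift_aut \<xi> k a)
       = emb G k (rev_prod G b k)"
proof -
  interpret group G by fact
  define a where "a = (\<lambda>i\<in>{..<k}. if i = k - 1 then \<one> else inv (rev_prod G b (Suc i)))"
  have bc: "\<And>i. i < k \<Longrightarrow> b i \<in> carrier G" using assms(4) by (auto simp: pg_carrier)
  have rc: "\<And>n. n \<le> k \<Longrightarrow> rev_prod G b n \<in> carrier G" using rev_prod_closed[OF assms(1,4)] .
  have ac: "a \<in> carrier (pow_group G k)" using rc by (auto simp: a_def pg_carrier simp del: rev_prod.simps)
  have x1: "\<xi> \<one> = \<one>" using xi_one[OF assms(1,2)] by simp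
  show ?thesis
  proof (intro bexI[OF _ ac] PiE_ext)
    show "a \<otimes>\<^bsub>pow_group G k\<^esub> b \<otimes>\<^bsub>pow_group G k\<^esub> inv\<^bsub>pow_group G k\<^esub> shift_aut \<xi> k a
      \<in> {..<k} \<rightarrow>\<^sub>E carrier G" using twist_closed[OF assms(1,2,3) ac assms(4)] by (simp add: pg_carrier)
    show "emb G k (rev_prod G b k) \<in> {..<k} \<rightarrow>\<^sub>E carrier G"
      using emb_closed[OF assms(1) rc[of k]] by (simp add: pg_carrier)
    fix i assume "i \<in> {..<k}"
    then have i: "i < k" by simp
    have ak: "a (k - 1) = \<one>" "a (k - Suc 0) = \<one>" using assms(3) by (simp_all add: a_def)
    show "(a \<otimes>\<^bsub>pow_group G k\<^esub> b \<otimes>\<^bsub>pow_group G k\<^esub> inv\<^bsub>pow_group G k\<^esub> shift_aut \<xi> k a) i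
       = emb G k (rev_prod G b k) i"
      unfolding twist_comp[OF assms(1,2,3) ac assms(4) i]
    proof (cases "i = 0")
      case True
      show "a i \<otimes> b i \<otimes> inv (if i = 0 then \<xi> (a (k - 1)) else a (i - 1)) = emb G k (rev_prod G b k) i"
      proof (cases "k = 1")
        case True
        then show ?thesis using \<open>i = 0\<close> bc[of 0] by (simp add: ak x1 emb_def a_def)
      next
        case False
        then have "a 0 = inv (b 0)" using bc[of 0] assms(3) by (simp add: a_def)
        then show ?thesis using \<open>i = 0\<close> False bc[of 0] assms(3) by (simp add: ak x1 emb_def)
      qed
    next
      case False
      have ar: "i - Suc 0 \<noteq> k - Suc 0" "i - Suc 0 < k" using False i by arith+
      have am: "a (i - 1) = inv (rev_prod G b i)" using False i ar by (simp add: a_def)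
      have "a i \<otimes> b i \<otimes> inv (a (i - 1)) = a i \<otimes> rev_prod G b (Suc i)"
        using am rc[of i] bc[of i] i ac by (simp add: m_assoc pg_carrier PiE_iff)
      also have "\<dots> = emb G k (rev_prod G b k) i"
      proof (cases "i = k - 1")
        case True then show ?thesis using i rc[of k] by (simp add: a_def emb_def)
      next
        case False then show ?thesis using i rc[of "Suc i"] by (simp add: a_def emb_def)
      qed
      finally show "a i \<otimes> b i \<otimes> inv (if i = 0 then \<xi> (a (k - 1)) else a (i - 1)) = emb G k (rev_prod G b k) i"
        using False by simp
    qed
  qed
qed

lemma emb_twist:
  fixes G (structure)
  assumes "group G" "\<xi> \<in> iso G G" "k > 0" "g \<in> carrier G" "c \<in> carrier G"
  shows "\<exists>a\<in>carrier (pow_group G k).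
     a \<otimes>\<^bsub>pow_group G k\<^esub> emb G k c \<otimes>\<^bsub>pow_group G k\<^esub> inv\<^bsub>pow_group G k\<^esub> (shift_aut \<xi> k a)
       = emb G k (g \<otimes> c \<otimes> inv (\<xi> g))"
proof -
  interpret group G by fact
  define a where "a = (\<lambda>i\<in>{..<k}. if i = k - 1 then g else \<xi> g)"
  have xg: "\<xi> g \<in> carrier G" using xi_closed[OF assms(2,4)] .
  have ac: "a \<in> carrier (pow_group G k)" using xg assms(4) by (auto simp: a_def pg_carrier)
  have ec: "emb G k c \<in> carrier (pow_group G k)" using emb_closed[OF assms(1,5)] .
  show ?thesis
  proof (intro bexI[OF _ ac] PiE_ext)
    show "a \<otimes>\<^bsub>pow_group G k\<^esub> emb G k c \<otimes>\<^bsub>pow_group G k\<^esub> inv\<^bsub>pow_group G k\<^esub> shift_aut \<xi> k a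
      \<in> {..<k} \<rightarrow>\<^sub>E carrier G" using twist_closed[OF assms(1,2,3) ac ec] by (simp add: pg_carrier)
    show "emb G k (g \<otimes> c \<otimes> inv (\<xi> g)) \<in> {..<k} \<rightarrow>\<^sub>E carrier G"
      using emb_closed[OF assms(1), of "g \<otimes> c \<otimes> inv (\<xi> g)"] xg assms by (simp add: pg_carrier)
    fix i assume "i \<in> {..<k}"
    then have i: "i < k" by simp
    have ak: "a (k - 1) = g" "a (k - Suc 0) = g" using assms(3) by (simp_all add: a_def)
    have "a i \<otimes> emb G k c i \<otimes> inv (if i = 0 then \<xi> (a (k - 1)) else a (i - 1))
       = emb G k (g \<otimes> c \<otimes> inv (\<xi> g)) i"
    proof (cases "i = 0")
      case True
      then show ?thesis using i xg assms(3,4,5) ak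
        by (cases "k = 1") (simp_all add: a_def emb_def)
    next
      case False
      have ar: "i - Suc 0 \<noteq> k - Suc 0" "i - Suc 0 < k" using False i by arith+
      then show ?thesis using False i xg assms(3,4,5) ak
        by (cases "i = k - 1") (simp_all add: a_def emb_def)
    qed
    then show "(a \<otimes>\<^bsub>pow_group G k\<^esub> emb G k c \<otimes>\<^bsub>pow_group G k\<^esub> inv\<^bsub>pow_group G k\<^esub> shift_aut \<xi> k a) i
       = emb G k (g \<otimes> c \<otimes> inv (\<xi> g)) i"
      by (simp only: twist_comp[OF assms(1,2,3) ac ec i])
  qed
qed



lemma push_lin_as_sum:
  assumes "finite A" "\<phi> ` A \<subseteq> B"
  shows "push_lin A B \<phi> f = (\<lambda>t. \<Sum>b\<in>A. f b * (basis_vec (\<phi> b) t :: 'k::field))"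
proof
  fix t
  show "push_lin A B \<phi> f t = (\<Sum>b\<in>A. f b * basis_vec (\<phi> b) t)"
  proof (cases "t \<in> B")
    case True
    have "(\<Sum>b\<in>A. f b * basis_vec (\<phi> b) t) = (\<Sum>b\<in>A. if \<phi> b = t then f b else 0)"
      by (rule sum.cong) (auto simp: basis_vec_def)
    also have "\<dots> = (\<Sum>b\<in>{b\<in>A. \<phi> b = t}. f b)"
      using assms(1) by (simp add: sum.inter_filter)
    finally show ?thesis using True by (simp add: push_lin_def)
  next
    case False
    then have "\<And>b. b \<in> A \<Longrightarrow> basis_vec (\<phi> b) t = (0::'k)" using assms(2) by (auto simp: basis_vec_def)
    then show ?thesis using False by (simp add: push_lin_def)
  qed
qed

lemma galg_as_sum:
  assumes "finite A" "x \<in> group_alg A"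
  shows "x t = (\<Sum>b\<in>A. x b * (basis_vec b t :: 'k::field))"
proof -
  have "(\<Sum>b\<in>A. x b * (basis_vec b t :: 'k)) = (\<Sum>b\<in>A. if b = t then x b else 0)"
    by (rule sum.cong) (auto simp: basis_vec_def)
  also have "\<dots> = x t" using assms by (auto simp: sum.delta' group_alg_def)
  finally show ?thesis by simp
qed

theorem lemma6p4:
  fixes G :: "'g monoid" and \<xi> :: "'g \<Rightarrow> 'g" and k :: nat
  assumes "group G" and "finite (carrier G)"
    and "\<xi> \<in> iso G G"
    and "k > 0"
  shows "induces_quot_iso
           (group_alg (carrier (pow_group G k)) :: ((nat \<Rightarrow> 'g) \<Rightarrow> 'k::field_char_0) set)
           (coinv_rel (pow_group G k) (shift_aut \<xi> k))
           (group_alg (carrier G))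
           (coinv_rel G \<xi>)
           (push_lin (carrier (pow_group G k)) (carrier G) (\<lambda>g. rev_prod G g k))"
proof -
  interpret group G by fact
  define H where "H = carrier (pow_group G k)"
  define \<pi> where "\<pi> = (\<lambda>g. rev_prod G g k)"
  have finH: "finite H" unfolding H_def pg_carrier using assms(2) by (simp add: finite_PiE)
  have piH: "\<pi> ` H \<subseteq> carrier G" unfolding \<pi>_def H_def using rev_prod_closed[OF assms(1)] by auto
  have embH: "emb G k ` carrier G \<subseteq> H" unfolding H_def using emb_closed[OF assms(1)] by auto
  have pi_emb: "\<And>c. c \<in> carrier G \<Longrightarrow> \<pi> (emb G k c) = c"
    unfolding \<pi>_def using rev_prod_emb[OF assms(1) _ assms(4)] by simp
  let ?S1 = "{(\<lambda>x. basis_vec (a \<otimes>\<^bsub>pow_group G k\<^esub> b \<otimes>\<^bsub>pow_group G k\<^esub> inv\<^bsub>pow_group G k\<^esub> (shift_aut \<xi> k a)) x - basis_vec b x)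
                            | a b. a \<in> carrier (pow_group G k) \<and> b \<in> carrier (pow_group G k)} :: ((nat \<Rightarrow> 'g) \<Rightarrow> 'k) set"
  let ?S2 = "{(\<lambda>x. basis_vec (a \<otimes>\<^bsub>G\<^esub> b \<otimes>\<^bsub>G\<^esub> inv\<^bsub>G\<^esub> (\<xi> a)) x - basis_vec b x)
                            | a b. a \<in> carrier G \<and> b \<in> carrier G} :: ('g \<Rightarrow> 'k) set"
  have R1: "coinv_rel (pow_group G k) (shift_aut \<xi> k) = lin_span ?S1" by (simp add: coinv_rel_def)
  have R2: "coinv_rel G \<xi> = lin_span ?S2" by (simp add: coinv_rel_def)
  have part1: "push_lin H (carrier G) \<pi> x \<in> lin_span ?S2" if "x \<in> lin_span ?S1" for x
  proof (rule push_lin_span[OF _ that])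
    fix v assume "v \<in> ?S1"
    then obtain a b where ab: "a \<in> H" "b \<in> H"
      and v: "v = (\<lambda>x. basis_vec (a \<otimes>\<^bsub>pow_group G k\<^esub> b \<otimes>\<^bsub>pow_group G k\<^esub> inv\<^bsub>pow_group G k\<^esub> (shift_aut \<xi> k a)) x - basis_vec b x)"
      unfolding H_def by blast
    have tc: "a \<otimes>\<^bsub>pow_group G k\<^esub> b \<otimes>\<^bsub>pow_group G k\<^esub> inv\<^bsub>pow_group G k\<^esub> (shift_aut \<xi> k a) \<in> H"
      using twist_closed[OF assms(1,3,4)] ab unfolding H_def by simp
    have ak: "a (k - 1) \<in> carrier G" using ab assms(4) unfolding H_def pg_carrier by auto
    have pb: "\<pi> b \<in> carrier G" using piH ab by auto
    have "push_lin H (carrier G) \<pi> v = (\<lambda>y. basis_vec (a (k - 1) \<otimes>\<^bsub>G\<^esub> \<pi> b \<otimes>\<^bsub>G\<^esub> inv\<^bsub>G\<^esub> (\<xi> (a (k - 1)))) y - basis_vec (\<pi> b) y)"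
      unfolding v push_lin_gen[OF finH tc ab(2) piH]
      using rev_prod_twist[OF assms(1,3,4)] ab unfolding \<pi>_def H_def by simp
    also have "\<dots> \<in> lin_span ?S2"
      by (rule lin_span_gen) (use ak pb in blast)
    finally show "push_lin H (carrier G) \<pi> v \<in> lin_span ?S2" .
  qed
  have part2: "x \<in> lin_span ?S1" if xV: "x \<in> group_alg H" and Lx: "push_lin H (carrier G) \<pi> x \<in> lin_span ?S2" for x :: "(nat \<Rightarrow> 'g) \<Rightarrow> 'k"
  proof -
    define r where "r = emb G k \<circ> \<pi>"
    have rH: "r ` H \<subseteq> H" using piH embH unfolding r_def by auto
    define z where "z = push_lin H H r x"
    have z_eq: "z = push_lin (carrier G) H (emb G k) (push_lin H (carrier G) \<pi> x)"
      unfolding z_def r_def by (rule push_lin_comp[symmetric, OF finH piH assms(2)])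
    have zR: "z \<in> lin_span ?S1"
      unfolding z_eq
    proof (rule push_lin_span[OF _ Lx])
      fix v assume "v \<in> ?S2"
      then obtain g c where gc: "g \<in> carrier G" "c \<in> carrier G"
        and v: "v = (\<lambda>x. basis_vec (g \<otimes>\<^bsub>G\<^esub> c \<otimes>\<^bsub>G\<^esub> inv\<^bsub>G\<^esub> (\<xi> g)) x - basis_vec c x)" by blast
      have gcc: "g \<otimes>\<^bsub>G\<^esub> c \<otimes>\<^bsub>G\<^esub> inv\<^bsub>G\<^esub> (\<xi> g) \<in> carrier G" using gc xi_closed[OF assms(3)] by simp
      obtain a where a: "a \<in> H" and aeq: "a \<otimes>\<^bsub>pow_group G k\<^esub> emb G k c \<otimes>\<^bsub>pow_group G k\<^esub> inv\<^bsub>pow_group G k\<^esub> (shift_aut \<xi> k a)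
       = emb G k (g \<otimes>\<^bsub>G\<^esub> c \<otimes>\<^bsub>G\<^esub> inv\<^bsub>G\<^esub> (\<xi> g))"
        using emb_twist[OF assms(1,3,4) gc] unfolding H_def by blast
      have "push_lin (carrier G) H (emb G k) v = (\<lambda>y. basis_vec (emb G k (g \<otimes>\<^bsub>G\<^esub> c \<otimes>\<^bsub>G\<^esub> inv\<^bsub>G\<^esub> (\<xi> g))) y - basis_vec (emb G k c) y)"
        unfolding v by (rule push_lin_gen[OF assms(2) gcc gc(2) embH])
      also have "\<dots> \<in> lin_span ?S1"
        by (rule lin_span_gen) (use a aeq[symmetric] embH gc(2) in \<open>auto simp: H_def\<close>)
      finally show "push_lin (carrier G) H (emb G k) v \<in> lin_span ?S1" .
    qed
    define w where "w = (\<lambda>t. \<Sum>b\<in>H. (- x b) * (basis_vec (r b) t - basis_vec b t))"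
    have wR: "w \<in> lin_span ?S1"
      unfolding w_def
    proof (rule lin_span_sum[OF finH])
      fix b assume b: "b \<in> H"
      obtain a where a: "a \<in> H" and aeq: "a \<otimes>\<^bsub>pow_group G k\<^esub> b \<otimes>\<^bsub>pow_group G k\<^esub> inv\<^bsub>pow_group G k\<^esub> (shift_aut \<xi> k a)
        = emb G k (rev_prod G b k)"
        using orbit_rep[OF assms(1,3,4), of b] b unfolding H_def by blast
      show "(\<lambda>t. basis_vec (r b) t - basis_vec b t) \<in> lin_span ?S1"
        by (rule lin_span_gen) (use a b aeq[symmetric] in \<open>auto simp: H_def r_def \<pi>_def\<close>)
    qed
    have "x = (\<lambda>t. w t + z t)"
    proof
      fix t
      have "w t = (\<Sum>b\<in>H. x b * basis_vec b t) - (\<Sum>b\<in>H. x b * basis_vec (r b) t)"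
        unfolding w_def by (simp add: sum_subtractf[symmetric] algebra_simps)
      moreover have "z t = (\<Sum>b\<in>H. x b * basis_vec (r b) t)"
        unfolding z_def push_lin_as_sum[OF finH rH] by simp
      ultimately show "x t = w t + z t" using galg_as_sum[OF finH xV, of t] by simp
    qed
    then show ?thesis using lin_span_add[OF wR zR] by simp
  qed
  have part3: "\<exists>x\<in>group_alg H. (\<lambda>t. push_lin H (carrier G) \<pi> x t - y t) \<in> lin_span ?S2"
    if yV: "y \<in> group_alg (carrier G)" for y :: "'g \<Rightarrow> 'k"
  proof (intro bexI)
    define x where "x = push_lin (carrier G) H (emb G k) y"
    show "x \<in> group_alg H" by (auto simp: x_def push_lin_def group_alg_def)
    have "push_lin H (carrier G) \<pi> x = push_lin (carrier G) (carrier G) (\<pi> \<circ> emb G k) y"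
      unfolding x_def by (rule push_lin_comp[OF assms(2) embH finH])
    also have "\<dots> = y"
    proof
      fix t
      show "push_lin (carrier G) (carrier G) (\<pi> \<circ> emb G k) y t = y t"
      proof (cases "t \<in> carrier G")
        case True
        have "{c \<in> carrier G. (\<pi> \<circ> emb G k) c = t} = {t}" using True pi_emb by auto
        then show ?thesis using True by (simp add: push_lin_def)
      next
        case False then show ?thesis using yV by (simp add: push_lin_def group_alg_def)
      qed
    qed
    finally show "(\<lambda>t. push_lin H (carrier G) \<pi> x t - y t) \<in> lin_span ?S2"
      by (simp add: lin_span_zero)
  qed
  show ?thesis
    unfolding induces_quot_iso_def R1 R2
    using part1 part2 part3 unfolding H_def \<pi>_def by blast
qed


end
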